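(* Let $\mathbb{M}$ be a flow monoid with idempotent addition, and consider flow graphs whose edge functions are continuous, distributive and decreasing. Then: (a) for every such flow graph $h=(X,E,\mathit{in}_0)$, every inflow $\mathit{in}$, $y\in X$ and $z\in\mathbb{N}\setminus X$, $\mathsf{tf}(h)(\mathit{in})(y,z)=\sum_{x\in X}\sum_{p\in\mathrm{SPaths}_h(x\to(y,z))}E_p(\mathit{in}_x)$; (b) for such flow graphs $h_1,h_2$ with the same node set $X$, $\mathsf{tf}(h_1)=\mathsf{tf}(h_2)$ if and only if simple path replacement of $h_1$ by $h_2$ and of $h_2$ by $h_1$ both hold.
   Context: A flow monoid is a commutative monoid $(\mathbb{M},+,0)$ such that $n\le m :\iff \exists o.\ m=n+o$ is a partial order in which every ascending chain $K$ has a least upper bound $\bigsqcup K$, and $n+\bigsqcup K=\bigsqcup(n+K)$. Addition is idempotent if $m+m=m$. A function $f$ is continuous if it commutes with least upper bounds of ascending chains, distributive if $f(m+n)=f(m)+f(n)$ and $f(0)=0$, decreasing if $f(m)\le m$. Sums and $\le$ on functions are pointwise; empty sums are $0$. A flow graph is $h=(X,E,\mathit{in})$ with $X\subseteq\mathbb{N}$ finite, $E:X\times\mathbb{N}\to$ continuous functions $\mathbb{M}\to\mathbb{M}$, $\mathit{in}:(\mathbb{N}\setminus X)\times X\to\mathbb{M}$; $\mathit{in}_x=\sum_{y\notin X}\mathit{in}(y,x)$ (infinite sums as least upper bounds of finite partial sums); the flow is the least $\mathit{flow}:X\to\mathbb{M}$ with $\mathit{flow}(x)=\mathit{in}_x+\sum_{y\in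 X}E(y,x)(\mathit{flow}(y))$; outflow $\mathit{out}(x,y)=E(x,y)(\mathit{flow}(x))$. The transfer function $\mathsf{tf}(h)$ maps each inflow $\mathit{in}'$ to the outflow of $(X,E,\mathit{in}')$. A path through $h$ is $p=x_0\cdots x_nz$ with $x_i\in X$, $z\in\mathbb{N}\setminus X$; it is simple if $x_0,\dots,x_n$ are pairwise distinct. $\mathrm{SPaths}_h(x\to(y,z))$ is the set of simple paths with $x_0=x$, $x_n=y$, final element $z$. $E_p=E(x_n,z)\circ\cdots\circ E(x_0,x_1)$; $E_P=\sum_{q\in P}E_q$. $\mathrm{Out}(h_1,h_2)=\{x\in X\mid\exists z.\ h_1.E(x,z)\neq h_2.E(x,z)\}$. Simple path replacement of $h_1$ by $h_2$: for every $x\in\mathrm{Out}(h_1,h_2)$, $y\in X$, $z\in\mathbb{N}\setminus X$ and every $p\in\mathrm{SPaths}_{h_1}(x\to(y,z))$ there is $P\subseteq\mathrm{SPaths}_{h_2}(x\to(y,z))$ with $E_p\le E_P$. *)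

theory Defs
  imports Main
begin

definition mle :: "'m::comm_monoid_add \<Rightarrow> 'm \<Rightarrow> bool" where
  "mle n m \<longleftrightarrow> (\<exists>k. m = n + k)"

definition is_chain_m :: "'m::comm_monoid_add set \<Rightarrow> bool" where
  "is_chain_m K \<longleftrightarrow> K \<noteq> {} \<and> (\<forall>a\<in>K. \<forall>b\<in>K. mle a b \<or> mle b a)"

definition is_lub_m :: "'m::comm_monoid_add set \<Rightarrow> 'm \<Rightarrow> bool" where
  "is_lub_m K l \<longleftrightarrow> (\<forall>k\<in>K. mle k l) \<and> (\<forall>u. (\<forall>k\<in>K. mle k u) \<longrightarrow> mle l u)"

definition Lub_m :: "'m::comm_monoid_add set \<Rightarrow> 'm" where
  "Lub_m K = (THE l. is_lub_m K l)"

definition flow_monoid :: "'m::comm_monoid_add itself \<Rightarrow> bool" where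
  "flow_monoid _ \<longleftrightarrow>
     (\<forall>a b::'m. mle a b \<and> mle b a \<longrightarrow> a = b) \<and>
     (\<forall>K::'m set. is_chain_m K \<longrightarrow> (\<exists>l. is_lub_m K l)) \<and>
     (\<forall>(n::'m) K. is_chain_m K \<longrightarrow> n + Lub_m K = Lub_m ((\<lambda>k. n + k) ` K))"

definition idempotent_add :: "'m::comm_monoid_add itself \<Rightarrow> bool" where
  "idempotent_add _ \<longleftrightarrow> (\<forall>m::'m. m + m = m)"

definition continuous_m :: "('m::comm_monoid_add \<Rightarrow> 'm) \<Rightarrow> bool" where
  "continuous_m f \<longleftrightarrow> (\<forall>K. is_chain_m K \<longrightarrow> f (Lub_m K) = Lub_m (f ` K))"

definition distributive_m :: "('m::comm_monoid_add \<Rightarrow> 'm) \<Rightarrow> bool" where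
  "distributive_m f \<longleftrightarrow> (\<forall>m n. f (m + n) = f m + f n) \<and> f 0 = 0"

definition decreasing_m :: "('m::comm_monoid_add \<Rightarrow> 'm) \<Rightarrow> bool" where
  "decreasing_m f \<longleftrightarrow> (\<forall>m. mle (f m) m)"

text \<open>A flow graph is given by a finite node set X, edge functions E (only
  E x z for x in X matter) and an inflow ifl (only ifl y x for y not in X,
  x in X matter).\<close>

type_synonym 'm edges = "nat \<Rightarrow> nat \<Rightarrow> 'm \<Rightarrow> 'm"
type_synonym 'm inflow = "nat \<Rightarrow> nat \<Rightarrow> 'm"

definition infsum_m :: "(nat \<Rightarrow> 'm::comm_monoid_add) \<Rightarrow> nat set \<Rightarrow> 'm" where
  "infsum_m f A = Lub_m {sum f F | F. finite F \<and> F \<subseteq> A}"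

definition inflow_at :: "nat set \<Rightarrow> 'm::comm_monoid_add inflow \<Rightarrow> nat \<Rightarrow> 'm" where
  "inflow_at X ifl x = infsum_m (\<lambda>y. ifl y x) (- X)"

definition is_flow_sol :: "nat set \<Rightarrow> 'm::comm_monoid_add edges \<Rightarrow> 'm inflow \<Rightarrow> (nat \<Rightarrow> 'm) \<Rightarrow> bool" where
  "is_flow_sol X E ifl fl \<longleftrightarrow>
     (\<forall>x\<in>X. fl x = inflow_at X ifl x + (\<Sum>y\<in>X. E y x (fl y)))"

definition flow :: "nat set \<Rightarrow> 'm::comm_monoid_add edges \<Rightarrow> 'm inflow \<Rightarrow> nat \<Rightarrow> 'm" where
  "flow X E ifl = (THE fl. is_flow_sol X E ifl fl
      \<and> (\<forall>g. is_flow_sol X E ifl g \<longrightarrow> (\<forall>x\<in>X. mle (fl x) (g x)))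
      \<and> (\<forall>x. x \<notin> X \<longrightarrow> fl x = 0))"

definition tf :: "nat set \<Rightarrow> 'm::comm_monoid_add edges \<Rightarrow> 'm inflow \<Rightarrow> nat \<Rightarrow> nat \<Rightarrow> 'm" where
  "tf X E ifl = (\<lambda>x z. if x \<in> X \<and> z \<notin> X then E x z (flow X E ifl x) else 0)"

text \<open>A path x0 ... xn z is represented by the list [x0,...,xn,z].\<close>
fun path_fun :: "'m edges \<Rightarrow> nat list \<Rightarrow> 'm \<Rightarrow> 'm" where
  "path_fun E (a # b # rest) = path_fun E (b # rest) \<circ> E a b"
| "path_fun E _ = id"

definition SPaths :: "nat set \<Rightarrow> nat \<Rightarrow> nat \<Rightarrow> nat \<Rightarrow> nat list set" where
  "SPaths X x y z = {xs @ [z] | xs. xs \<noteq> [] \<and> set xs \<subseteq> X \<and> distinct xs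
                       \<and> hd xs = x \<and> last xs = y \<and> z \<notin> X}"

definition Out :: "nat set \<Rightarrow> 'm edges \<Rightarrow> 'm edges \<Rightarrow> nat set" where
  "Out X E1 E2 = {x \<in> X. \<exists>z. E1 x z \<noteq> E2 x z}"

definition spath_repl :: "nat set \<Rightarrow> 'm::comm_monoid_add edges \<Rightarrow> 'm edges \<Rightarrow> bool" where
  "spath_repl X E1 E2 \<longleftrightarrow>
     (\<forall>x\<in>Out X E1 E2. \<forall>y\<in>X. \<forall>z. z \<notin> X \<longrightarrow>
        (\<forall>p\<in>SPaths X x y z. \<exists>P. P \<subseteq> SPaths X x y z \<and>
            (\<forall>m. mle (path_fun E1 p m) (\<Sum>q\<in>P. path_fun E2 q m))))"

definition good_edges :: "nat set \<Rightarrow> 'm::comm_monoid_add edges \<Rightarrow> bool" where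
  "good_edges X E \<longleftrightarrow> (\<forall>x\<in>X. \<forall>z. continuous_m (E x z) \<and> distributive_m (E x z)
                                    \<and> decreasing_m (E x z))"

end

theory Submission imports Defs begin

lemma path_fun_append:
  "path_fun E (xs @ a # ys) = path_fun E (a # ys) \<circ> path_fun E (xs @ [a])"
proof (induction xs)
  case Nil then show ?case by simp
next
  case (Cons b xs) then show ?case by (cases xs) (auto simp: comp_assoc)
qed

lemma path_fun_snoc:
  assumes "xs \<noteq> []" shows "path_fun E (xs @ [z]) = E (last xs) z \<circ> path_fun E xs"
proof -
  have "xs = butlast xs @ [last xs]" using assms by simp
  then have "path_fun E (xs @ [z]) = path_fun E (butlast xs @ last xs # [z])" by (metis append.assoc append_Cons append_Nil)
  also have "\<dots> = path_fun E [last xs, z] \<circ> path_fun E (butlast xs @ [last xs])" by (rule path_fun_append)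
  also have "\<dots> = E (last xs) z \<circ> path_fun E xs" using \<open>xs = _\<close> by simp
  finally show ?thesis .
qed

lemma path_fun_cong:
  "(\<forall>a\<in>set (butlast p). \<forall>b. E1 a b = E2 a b) \<Longrightarrow> path_fun E1 p = path_fun E2 p"
proof (induction p)
  case Nil then show ?case by simp
next
  case (Cons a p) then show ?case by (cases p) auto
qed

lemma finite_distinct_lists: "finite X \<Longrightarrow> finite {xs. set xs \<subseteq> X \<and> distinct xs}"
proof -
  assume f: "finite X"
  have "{xs. set xs \<subseteq> X \<and> distinct xs} \<subseteq> {xs. set xs \<subseteq> X \<and> length xs \<le> card X}"
  proof
    fix xs assume "xs \<in> {xs. set xs \<subseteq> X \<and> distinct xs}"
    then have a: "set xs \<subseteq> X" "distinct xs" by auto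
    have "length xs = card (set xs)" using a(2) by (simp add: distinct_card)
    also have "\<dots> \<le> card X" using card_mono[OF f a(1)] .
    finally show "xs \<in> {xs. set xs \<subseteq> X \<and> length xs \<le> card X}" using a by simp
  qed
  then show ?thesis using finite_lists_length_le[OF f] by (rule finite_subset)
qed

lemma finite_SPaths: "finite X \<Longrightarrow> finite (SPaths X x y z)"
proof -
  assume f: "finite X"
  have "SPaths X x y z \<subseteq> (\<lambda>xs. xs @ [z]) ` {xs. set xs \<subseteq> X \<and> distinct xs}"
    unfolding SPaths_def by blast
  moreover have "finite ((\<lambda>xs. xs @ [z]) ` {xs. set xs \<subseteq> X \<and> distinct xs})"
    using finite_distinct_lists[OF f] by simp
  ultimately show ?thesis by (rule finite_subset)
qed

locale idm =
  fixes T :: "'m::comm_monoid_add itself"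
  assumes idem: "\<And>m::'m. m + m = m"
begin

lemma mle_iff: "mle a b \<longleftrightarrow> a + b = (b::'m)"
proof
  assume "mle a b"
  then obtain k where "b = a + k" unfolding mle_def by blast
  then show "a + b = b" by (simp add: add.assoc[symmetric] idem)
next
  assume "a + b = b" then show "mle a b" unfolding mle_def by (metis)
qed

lemma mle_refl: "mle (a::'m) a" by (simp add: mle_iff idem)
lemma mle_trans[trans]: "mle (a::'m) b \<Longrightarrow> mle b c \<Longrightarrow> mle a c"
  unfolding mle_iff by (metis add.assoc)
lemma mle_antisym: "mle (a::'m) b \<Longrightarrow> mle b a \<Longrightarrow> a = b"
  unfolding mle_iff by (metis add.commute)
lemma mle_add1: "mle (a::'m) (a + b)"
  unfolding mle_iff by (simp add: add.assoc[symmetric] idem)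
lemma mle_add2: "mle (b::'m) (a + b)"
  unfolding mle_iff by (metis add.assoc add.commute idem)
lemma mle_add_least: "mle (a::'m) c \<Longrightarrow> mle b c \<Longrightarrow> mle (a + b) c"
  unfolding mle_iff by (metis add.assoc)
lemma mle_zero: "mle 0 (a::'m)" by (simp add: mle_iff)

lemma sum_upper: "finite A \<Longrightarrow> i \<in> A \<Longrightarrow> mle (f i :: 'm) (sum f A)"
  by (metis mle_add1 sum.remove)

lemma sum_least:
  assumes "\<And>i. i \<in> A \<Longrightarrow> mle (f i :: 'm) c" shows "mle (sum f A) c"
proof (cases "finite A")
  case True
  then show ?thesis using assms
  proof (induction A rule: finite_induct)
    case empty then show ?case by (simp add: mle_zero)
  next
    case (insert x F)
    have "mle (f x) c" using insert.prems by simp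
    moreover have "mle (sum f F) c" using insert.IH insert.prems by simp
    ultimately show ?case using insert.hyps by (simp add: mle_add_least)
  qed
qed (simp add: mle_zero)

lemma distrib_mono: "distributive_m f \<Longrightarrow> mle (a::'m) b \<Longrightarrow> mle (f a) (f b)"
  unfolding distributive_m_def mle_def by metis

lemma distrib_sum: "distributive_m (f::'m\<Rightarrow>'m) \<Longrightarrow> f (sum g A) = (\<Sum>i\<in>A. f (g i))"
proof (cases "finite A")
  case True
  assume d: "distributive_m f"
  show ?thesis using True by (induction A rule: finite_induct) (use d in \<open>auto simp: distributive_m_def\<close>)
qed (simp add: distributive_m_def)

lemma path_good:
  "good_edges X (E::'m edges) \<Longrightarrow> set (butlast p) \<subseteq> X \<Longrightarrow>
     distributive_m (path_fun E p) \<and> decreasing_m (path_fun E p)"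
proof (induction p)
  case Nil then show ?case by (simp add: distributive_m_def decreasing_m_def mle_refl)
next
  case (Cons a p)
  show ?case
  proof (cases p)
    case Nil then show ?thesis by (simp add: distributive_m_def decreasing_m_def mle_refl)
  next
    case (Cons b q)
    have ih: "distributive_m (path_fun E p) \<and> decreasing_m (path_fun E p)"
      using Cons.IH Cons.prems \<open>p = b # q\<close> by auto
    have e: "distributive_m (E a b) \<and> decreasing_m (E a b)"
      using Cons.prems \<open>p = b # q\<close> by (auto simp: good_edges_def)
    have dd: "distributive_m (path_fun E (a # p))"
      using ih e \<open>p = b # q\<close> by (simp add: distributive_m_def)
    have "mle (path_fun E (a # p) m) m" for m
    proof -
      have "mle (path_fun E p (E a b m)) (E a b m)" using ih by (simp add: decreasing_m_def)
      also have "mle (E a b m) m" using e by (simp add: decreasing_m_def)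
      finally show ?thesis using \<open>p = b # q\<close> by simp
    qed
    then show ?thesis using dd by (simp add: decreasing_m_def)
  qed
qed


lemma path_zero: "good_edges X (E::'m edges) \<Longrightarrow> set (butlast p) \<subseteq> X \<Longrightarrow> path_fun E p 0 = 0"
  using path_good by (auto simp: distributive_m_def)

lemma path_mono: "good_edges X (E::'m edges) \<Longrightarrow> set (butlast p) \<subseteq> X \<Longrightarrow> mle a b \<Longrightarrow> mle (path_fun E p a) (path_fun E p b)"
  using path_good distrib_mono by blast

lemma butlast_subset: "set (butlast p) \<subseteq> set p"
  by (meson in_set_butlastD subsetI)

lemma reduce:
  assumes g: "good_edges X (E::'m edges)"
  shows "ws \<noteq> [] \<Longrightarrow> set ws \<subseteq> X \<Longrightarrow> \<exists>ys. ys \<noteq> [] \<and> set ys \<subseteq> set ws \<and> distinct ys \<and> hd ys = hd ws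
      \<and> last ys = last ws \<and> (\<forall>m. mle (path_fun E ws m) (path_fun E ys m))"
proof (induction "length ws" arbitrary: ws rule: less_induct)
  case less
  show ?case
  proof (cases "distinct ws")
    case True then show ?thesis using less.prems by (intro exI[of _ ws]) (auto intro: mle_refl)
  next
    case False
    then obtain as a bs cs where ws: "ws = as @ [a] @ bs @ [a] @ cs" using not_distinct_decomp by blast
    define ws' where "ws' = as @ [a] @ cs"
    have len: "length ws' < length ws" using ws ws'_def by simp
    have p1: "ws' \<noteq> []" "set ws' \<subseteq> X" "hd ws' = hd ws" "last ws' = last ws" "set ws' \<subseteq> set ws"
      using less.prems ws ws'_def by (auto simp: hd_append)
    have le: "mle (path_fun E ws m) (path_fun E ws' m)" for m
    proof -
      have e1: "path_fun E ws = path_fun E (a # cs) \<circ> path_fun E (a # bs @ [a]) \<circ> path_fun E (as @ [a])"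
      proof -
        have "path_fun E ws = path_fun E (a # cs) \<circ> path_fun E ((as @ [a] @ bs) @ [a])"
          using path_fun_append[of E "as @ [a] @ bs" a cs] ws by simp
        also have "path_fun E ((as @ [a] @ bs) @ [a]) = path_fun E (a # bs @ [a]) \<circ> path_fun E (as @ [a])"
          using path_fun_append[of E as a "bs @ [a]"] by simp
        finally show ?thesis by (simp add: comp_def)
      qed
      have e2: "path_fun E ws' = path_fun E (a # cs) \<circ> path_fun E (as @ [a])"
        using path_fun_append[of E as a cs] ws'_def by simp
      have d: "decreasing_m (path_fun E (a # bs @ [a]))"
        using path_good[OF g, of "a # bs @ [a]"] less.prems ws by auto
      have "set (butlast (a # cs)) \<subseteq> X" using less.prems ws butlast_subset by fastforce
      then show ?thesis using e1 e2 d path_mono[OF g] by (auto simp: decreasing_m_def)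
    qed
    obtain ys where ys: "ys \<noteq> []" "set ys \<subseteq> set ws'" "distinct ys" "hd ys = hd ws'"
      "last ys = last ws'" "\<forall>m. mle (path_fun E ws' m) (path_fun E ys m)"
      using less.hyps[OF len p1(1,2)] by blast
    have "mle (path_fun E ws m) (path_fun E ys m)" for m
      using le[of m] ys(6) mle_trans by blast
    then show ?thesis using ys p1 by (intro exI[of _ ys]) auto
  qed
qed

lemma reduce_exit:
  assumes g: "good_edges X (E::'m edges)" and "ws \<noteq> []" "set ws \<subseteq> X" "z \<notin> X"
  shows "\<exists>q\<in>SPaths X (hd ws) (last ws) z. \<forall>m. mle (path_fun E (ws @ [z]) m) (path_fun E q m)"
proof -
  obtain ys where ys: "ys \<noteq> []" "set ys \<subseteq> set ws" "distinct ys" "hd ys = hd ws"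
      "last ys = last ws" "\<forall>m. mle (path_fun E ws m) (path_fun E ys m)"
    using reduce[OF g assms(2,3)] by blast
  have q: "ys @ [z] \<in> SPaths X (hd ws) (last ws) z" using ys assms unfolding SPaths_def by blast
  have "last ws \<in> X" using assms by auto
  then have dE: "distributive_m (E (last ws) z)" using g by (auto simp: good_edges_def)
  have "mle (path_fun E (ws @ [z]) m) (path_fun E (ys @ [z]) m)" for m
    using path_fun_snoc[of ws E z] path_fun_snoc[of ys E z] assms ys distrib_mono[OF dE] by simp
  then show ?thesis using q by blast
qed

definition SP :: "nat set \<Rightarrow> nat \<Rightarrow> nat \<Rightarrow> nat list set" where
  "SP X x y = {xs. xs \<noteq> [] \<and> set xs \<subseteq> X \<and> distinct xs \<and> hd xs = x \<and> last xs = y}"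

lemma finite_SP: "finite X \<Longrightarrow> finite (SP X x y)"
  by (rule finite_subset[OF _ finite_distinct_lists]) (auto simp: SP_def)

lemma part_a:
  assumes fin: "finite X" and g: "good_edges X (E::'m edges)" and y: "y \<in> X" and z: "z \<notin> X"
  shows "tf X E ifl y z = (\<Sum>x\<in>X. \<Sum>p\<in>SPaths X x y z. path_fun E p (inflow_at X ifl x))"
proof -
  define inn where "inn = inflow_at X ifl"
  define S where "S y = (\<Sum>x\<in>X. \<Sum>xs\<in>SP X x y. path_fun E xs (inn x))" for y
  define S' where "S' y = (if y \<in> X then S y else 0)" for y
  have dE: "distributive_m (E a b)" if "a \<in> X" for a b using g that by (auto simp: good_edges_def)
  have t1: "mle (path_fun E xs (inn (hd xs))) (S (last xs))"
    if "xs \<noteq> []" "set xs \<subseteq> X" "distinct xs" for xs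
  proof -
    have h: "hd xs \<in> X" using that by auto
    have "xs \<in> SP X (hd xs) (last xs)" using that by (auto simp: SP_def)
    then have "mle (path_fun E xs (inn (hd xs))) (\<Sum>xs'\<in>SP X (hd xs) (last xs). path_fun E xs' (inn (hd xs)))"
      by (rule sum_upper[OF finite_SP[OF fin]])
    also have "mle \<dots> (S (last xs))" unfolding S_def by (rule sum_upper[OF fin h])
    finally show ?thesis .
  qed
  have t2: "mle (path_fun E xs (inn (hd xs))) (S (last xs))"
    if xsne: "xs \<noteq> []" and xsX: "set xs \<subseteq> X" for xs
  proof -
    obtain ys where ys: "ys \<noteq> []" "set ys \<subseteq> set xs" "distinct ys" "hd ys = hd xs"
      "last ys = last xs" "\<forall>m. mle (path_fun E xs m) (path_fun E ys m)"
      using reduce[OF g xsne xsX] by blast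
    have "mle (path_fun E xs (inn (hd xs))) (path_fun E ys (inn (hd ys)))" using ys by simp
    also have "mle \<dots> (S (last ys))" using t1[of ys] ys xsX by auto
    finally show ?thesis using ys by simp
  qed
  have sol: "S y = inn y + (\<Sum>w\<in>X. E w y (S w))" if yX: "y \<in> X" for y
  proof (rule mle_antisym)
    show "mle (inn y + (\<Sum>w\<in>X. E w y (S w))) (S y)"
    proof (rule mle_add_least)
      show "mle (inn y) (S y)" using t1[of "[y]"] yX by simp
      show "mle (\<Sum>w\<in>X. E w y (S w)) (S y)"
      proof (rule sum_least)
        fix w assume wX: "w \<in> X"
        have "E w y (S w) = (\<Sum>x\<in>X. \<Sum>xs\<in>SP X x w. E w y (path_fun E xs (inn x)))"
          unfolding S_def by (simp add: distrib_sum[OF dE[OF wX]])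
        also have "mle \<dots> (S y)"
        proof (intro sum_least)
          fix x xs assume "x \<in> X" "xs \<in> SP X x w"
          then have xs: "xs \<noteq> []" "set xs \<subseteq> X" "hd xs = x" "last xs = w" by (auto simp: SP_def)
          have "E w y (path_fun E xs (inn x)) = path_fun E (xs @ [y]) (inn (hd (xs @ [y])))"
            using path_fun_snoc[of xs E y] xs by simp
          also have "mle \<dots> (S (last (xs @ [y])))" using t2[of "xs @ [y]"] xs yX by simp
          finally show "mle (E w y (path_fun E xs (inn x))) (S y)" by simp
        qed
        finally show "mle (E w y (S w)) (S y)" .
      qed
    qed
  next
    show "mle (S y) (inn y + (\<Sum>w\<in>X. E w y (S w)))"
      unfolding S_def[of y]
    proof (intro sum_least)
      fix x xs assume "x \<in> X" "xs \<in> SP X x y"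
      then have xs: "xs \<noteq> []" "set xs \<subseteq> X" "hd xs = x" "last xs = y" "distinct xs" by (auto simp: SP_def)
      show "mle (path_fun E xs (inn x)) (inn y + (\<Sum>w\<in>X. E w y (S w)))"
      proof (cases "butlast xs = []")
        case True
        then have "xs = [y]" using xs by (metis append_butlast_last_id append_Nil)
        then show ?thesis using xs by (simp add: mle_add1)
      next
        case False
        define xs' where "xs' = butlast xs"
        have xs_eq: "xs = xs' @ [y]" using xs xs'_def by (metis append_butlast_last_id)
        have p1: "xs' \<noteq> []" using False xs'_def by simp
        have p2: "set xs' \<subseteq> X" using xs(2) xs_eq by (metis le_supE set_append)
        have p3: "distinct xs'" using xs(5) xs'_def by (simp add: distinct_butlast)
        have p4: "hd xs' = x" using xs(3) xs_eq p1 by (metis hd_append2)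
        note p = p1 p2 p3 p4
        define w where "w = last xs'"
        have wX: "w \<in> X" using p w_def by auto
        have "path_fun E xs (inn x) = E w y (path_fun E xs' (inn x))"
          using xs_eq path_fun_snoc[of xs' E y] p w_def by simp
        also have "mle \<dots> (E w y (S w))"
          using t1[OF p(1-3)] p(4) w_def distrib_mono[OF dE[OF wX]] by simp
        also have "mle \<dots> (\<Sum>w\<in>X. E w y (S w))" by (rule sum_upper[OF fin wX])
        also have "mle \<dots> (inn y + (\<Sum>w\<in>X. E w y (S w)))" by (rule mle_add2)
        finally show ?thesis .
      qed
    qed
  qed
  have solS': "is_flow_sol X E ifl S'"
    unfolding is_flow_sol_def S'_def using sol by (simp add: inn_def)
  have minS': "\<forall>x\<in>X. mle (S' x) (g x)" if gs: "is_flow_sol X E ifl g" for g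
  proof -
    have gy: "g y = inn y + (\<Sum>w\<in>X. E w y (g w))" if "y \<in> X" for y
      using gs that by (simp add: is_flow_sol_def inn_def)
    have w: "mle (path_fun E xs (inn (hd xs))) (g (last xs))" if "xs \<noteq> []" "set xs \<subseteq> X" for xs
      using that
    proof (induction xs rule: rev_induct)
      case Nil then show ?case by simp
    next
      case (snoc a xs)
      show ?case
      proof (cases "xs = []")
        case True
        then show ?thesis using gy[of a] snoc.prems by (simp add: mle_add1)
      next
        case False
        have aX: "a \<in> X" "last xs \<in> X" using snoc.prems False by auto
        have "path_fun E (xs @ [a]) (inn (hd (xs @ [a]))) = E (last xs) a (path_fun E xs (inn (hd xs)))"
          using path_fun_snoc[of xs E a] False by simp
        also have "mle \<dots> (E (last xs) a (g (last xs)))"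
          using snoc.IH[OF False] snoc.prems distrib_mono[OF dE[OF aX(2)]] by simp
        also have "mle \<dots> (\<Sum>w\<in>X. E w a (g w))" by (rule sum_upper[OF fin aX(2)])
        also have "mle \<dots> (g a)" using gy[OF aX(1)] mle_add2 by simp
        finally show ?thesis by simp
      qed
    qed
    show ?thesis
    proof
      fix y assume yX: "y \<in> X"
      have "mle (S y) (g y)" unfolding S_def
      proof (intro sum_least)
        fix x xs assume "x \<in> X" "xs \<in> SP X x y"
        then show "mle (path_fun E xs (inn x)) (g y)" using w[of xs] by (auto simp: SP_def)
      qed
      then show "mle (S' y) (g y)" using yX S'_def by simp
    qed
  qed
  have fl: "flow X E ifl = S'"
    unfolding flow_def
  proof (rule the_equality)
    show "is_flow_sol X E ifl S' \<and> (\<forall>g. is_flow_sol X E ifl g \<longrightarrow> (\<forall>x\<in>X. mle (S' x) (g x))) \<and> (\<forall>x. x \<notin> X \<longrightarrow> S' x = 0)"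
      using solS' minS' S'_def by simp
  next
    fix fl assume a: "is_flow_sol X E ifl fl \<and> (\<forall>g. is_flow_sol X E ifl g \<longrightarrow> (\<forall>x\<in>X. mle (fl x) (g x))) \<and> (\<forall>x. x \<notin> X \<longrightarrow> fl x = 0)"
    show "fl = S'"
    proof
      fix x show "fl x = S' x"
      proof (cases "x \<in> X")
        case True
        have c1: "mle (fl x) (S' x)" using a solS' True by blast
        have c2: "mle (S' x) (fl x)" using minS'[of fl] a True by blast
        show ?thesis using c1 c2 by (rule mle_antisym)
      next
        case False then show ?thesis using a S'_def by simp
      qed
    qed
  qed
  have "tf X E ifl y z = E y z (S y)" using y z fl S'_def by (simp add: tf_def)
  also have "\<dots> = (\<Sum>x\<in>X. \<Sum>xs\<in>SP X x y. E y z (path_fun E xs (inn x)))"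
    unfolding S_def by (simp add: distrib_sum[OF dE[OF y]])
  also have "\<dots> = (\<Sum>x\<in>X. \<Sum>p\<in>SPaths X x y z. path_fun E p (inn x))"
  proof (rule sum.cong[OF refl])
    fix x assume "x \<in> X"
    have im: "SPaths X x y z = (\<lambda>xs. xs @ [z]) ` SP X x y" using z by (auto simp: SPaths_def SP_def)
    have inj: "inj_on (\<lambda>xs. xs @ [z]) (SP X x y)" by (auto simp: inj_on_def)
    have "(\<Sum>p\<in>SPaths X x y z. path_fun E p (inn x)) = (\<Sum>xs\<in>SP X x y. path_fun E (xs @ [z]) (inn x))"
      unfolding im by (simp add: sum.reindex[OF inj])
    also have "\<dots> = (\<Sum>xs\<in>SP X x y. E y z (path_fun E xs (inn x)))"
      by (rule sum.cong[OF refl]) (auto simp: SP_def path_fun_snoc)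
    finally show "(\<Sum>xs\<in>SP X x y. E y z (path_fun E xs (inn x))) = (\<Sum>p\<in>SPaths X x y z. path_fun E p (inn x))" by simp
  qed
  finally show ?thesis by (simp add: inn_def)
qed


lemma lub_unique: "is_lub_m K (l::'m) \<Longrightarrow> Lub_m K = l"
  unfolding Lub_m_def
proof (rule the_equality)
  fix l' assume a: "is_lub_m K l'" "is_lub_m K l"
  show "l' = l" using a by (intro mle_antisym) (auto simp: is_lub_m_def)
qed

lemma infsum_single:
  assumes a0: "a0 \<in> A" and z: "\<And>a. a \<in> A \<Longrightarrow> a \<noteq> a0 \<Longrightarrow> f a = (0::'m)"
  shows "infsum_m f A = f a0"
proof -
  let ?K = "{sum f F | F. finite F \<and> F \<subseteq> A}"
  have mem: "f a0 \<in> ?K" using a0 by (intro CollectI exI[of _ "{a0}"]) simp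
  have ub: "mle k (f a0)" if "k \<in> ?K" for k
  proof -
    obtain F where F: "k = sum f F" "F \<subseteq> A" using \<open>k \<in> ?K\<close> by blast
    have "mle (f a) (f a0)" if "a \<in> F" for a
    proof (cases "a = a0")
      case True then show ?thesis by (simp add: mle_refl)
    next
      case False then show ?thesis using z[of a] F \<open>a \<in> F\<close> by (auto simp: mle_zero)
    qed
    then show ?thesis using F(1) sum_least by blast
  qed
  have "is_lub_m ?K (f a0)" unfolding is_lub_m_def using ub mem by blast
  then show ?thesis unfolding infsum_m_def by (rule lub_unique)
qed

lemma SPaths_mem: "p \<in> SPaths X x y z \<longleftrightarrow>
   (\<exists>xs. p = xs @ [z] \<and> xs \<noteq> [] \<and> set xs \<subseteq> X \<and> distinct xs \<and> hd xs = x \<and> last xs = y \<and> z \<notin> X)"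
  unfolding SPaths_def by blast

lemma key:
  assumes fin: "finite X" and g1: "good_edges X (E1::'m edges)" and g2: "good_edges X E2"
    and r: "spath_repl X E1 E2" and p: "p \<in> SPaths X x y z"
  shows "mle (path_fun E1 p m) (\<Sum>q\<in>SPaths X x y z. path_fun E2 q m)"
proof -
  obtain xs where xs: "p = xs @ [z]" "xs \<noteq> []" "set xs \<subseteq> X" "distinct xs" "hd xs = x" "last xs = y" "z \<notin> X"
    using p SPaths_mem by blast
  have yX: "y \<in> X" using xs by auto
  show ?thesis
  proof (cases "\<exists>a\<in>set xs. a \<in> Out X E1 E2")
    case False
    have "\<forall>a\<in>set (butlast p). \<forall>b. E1 a b = E2 a b"
      using False xs(1,3) by (auto simp: Out_def)
    then have "path_fun E1 p = path_fun E2 p" by (rule path_fun_cong)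
    then show ?thesis using sum_upper[OF finite_SPaths[OF fin] p] by simp
  next
    case True
    then obtain as a cs where sp: "xs = as @ a # cs" "a \<in> Out X E1 E2" "\<forall>b\<in>set as. b \<notin> Out X E1 E2"
      by (rule split_list_first_propE) blast
    have aX: "a \<in> X" using sp by (simp add: Out_def)
    have p': "(a # cs) @ [z] \<in> SPaths X a y z"
      unfolding SPaths_mem using xs sp by (intro exI[of _ "a # cs"]) auto
    obtain P' where P': "P' \<subseteq> SPaths X a y z"
      "\<And>m. mle (path_fun E1 ((a # cs) @ [z]) m) (\<Sum>q\<in>P'. path_fun E2 q m)"
    proof -
      have "\<forall>p\<in>SPaths X a y z. \<exists>P. P \<subseteq> SPaths X a y z \<and>
            (\<forall>m. mle (path_fun E1 p m) (\<Sum>q\<in>P. path_fun E2 q m))"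
        using r sp(2) yX xs(7) unfolding spath_repl_def by simp
      then show ?thesis using p' that by blast
    qed
    have asX: "set as \<subseteq> X" using xs(3) sp(1) by auto
    have eq12: "path_fun E1 (as @ [a]) = path_fun E2 (as @ [a])"
      by (rule path_fun_cong) (use sp(3) asX in \<open>auto simp: Out_def\<close>)
    define t where "t = path_fun E2 (as @ [a]) m"
    have "path_fun E1 p m = path_fun E1 ((a # cs) @ [z]) (path_fun E1 (as @ [a]) m)"
      using path_fun_append[of E1 as a "cs @ [z]"] xs(1) sp(1) by simp
    also have "\<dots> = path_fun E1 ((a # cs) @ [z]) t" using eq12 t_def by simp
    also have "mle \<dots> (\<Sum>q\<in>P'. path_fun E2 q t)" by (rule P'(2))
    also have "mle \<dots> (\<Sum>q\<in>SPaths X x y z. path_fun E2 q m)"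
    proof (rule sum_least)
      fix q assume "q \<in> P'"
      then have "q \<in> SPaths X a y z" using P'(1) by blast
      then obtain ws where ws: "q = ws @ [z]" "ws \<noteq> []" "set ws \<subseteq> X" "hd ws = a" "last ws = y"
        using SPaths_mem by blast
      have wsc: "ws = a # tl ws" using ws by (metis list.collapse)
      have "path_fun E2 q t = path_fun E2 (as @ a # (tl ws @ [z])) m"
        using path_fun_append[of E2 as a "tl ws @ [z]"] t_def ws(1) wsc by (metis append_Cons comp_apply)
      also have "as @ a # (tl ws @ [z]) = (as @ ws) @ [z]" using wsc by (metis append.assoc append_Cons)
      finally have e: "path_fun E2 q t = path_fun E2 ((as @ ws) @ [z]) m" .
      have hd1: "hd (as @ ws) = x" using xs(5) sp(1) ws(4) ws(2) by (cases as) auto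
      have l1: "last (as @ ws) = y" using ws by simp
      obtain q0 where q0: "q0 \<in> SPaths X (hd (as @ ws)) (last (as @ ws)) z"
        "\<forall>m. mle (path_fun E2 ((as @ ws) @ [z]) m) (path_fun E2 q0 m)"
        using reduce_exit[OF g2, of "as @ ws" z] ws asX xs(7) by auto
      have q0': "q0 \<in> SPaths X x y z" using q0(1) hd1 l1 by simp
      have "mle (path_fun E2 q t) (path_fun E2 q0 m)" using e q0(2) by simp
      also have "mle \<dots> (\<Sum>q\<in>SPaths X x y z. path_fun E2 q m)"
        by (rule sum_upper[OF finite_SPaths[OF fin] q0'])
      finally show "mle (path_fun E2 q t) (\<Sum>q\<in>SPaths X x y z. path_fun E2 q m)" .
    qed
    finally show ?thesis .
  qed
qed

lemma tf_le:
  assumes fin: "finite X" and g1: "good_edges X (E1::'m edges)" and g2: "good_edges X E2"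
    and r: "spath_repl X E1 E2" and y: "y \<in> X" and z: "z \<notin> X"
  shows "mle (tf X E1 ifl y z) (tf X E2 ifl y z)"
  unfolding part_a[OF fin g1 y z] part_a[OF fin g2 y z]
proof (intro sum_least)
  fix x p assume x: "x \<in> X" and p: "p \<in> SPaths X x y z"
  have "mle (path_fun E1 p (inflow_at X ifl x)) (\<Sum>q\<in>SPaths X x y z. path_fun E2 q (inflow_at X ifl x))"
    by (rule key[OF fin g1 g2 r p])
  also have "mle \<dots> (\<Sum>x\<in>X. \<Sum>q\<in>SPaths X x y z. path_fun E2 q (inflow_at X ifl x))"
    by (rule sum_upper[OF fin x])
  finally show "mle (path_fun E1 p (inflow_at X ifl x)) (\<Sum>x\<in>X. \<Sum>q\<in>SPaths X x y z. path_fun E2 q (inflow_at X ifl x))" .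
qed

lemma tf_eq:
  assumes fin: "finite X" and g1: "good_edges X (E1::'m edges)" and g2: "good_edges X E2"
    and r1: "spath_repl X E1 E2" and r2: "spath_repl X E2 E1"
  shows "tf X E1 = tf X E2"
proof (intro ext)
  fix ifl y z
  show "tf X E1 ifl y z = tf X E2 ifl y z"
  proof (cases "y \<in> X \<and> z \<notin> X")
    case True
    then show ?thesis using tf_le[OF fin g1 g2 r1] tf_le[OF fin g2 g1 r2] mle_antisym by blast
  next
    case False then show ?thesis unfolding tf_def by auto
  qed
qed

lemma repl_of_tf:
  assumes fin: "finite X" and g1: "good_edges X (E1::'m edges)" and g2: "good_edges X E2"
    and eq: "tf X E1 = tf X E2"
  shows "spath_repl X E1 E2"
  unfolding spath_repl_def
proof (intro ballI allI impI)
  fix x y z p assume x: "x \<in> Out X E1 E2" and y: "y \<in> X" and z: "z \<notin> X" and p: "p \<in> SPaths X x y z"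
  have xX: "x \<in> X" using x by (simp add: Out_def)
  obtain n0 where n0: "n0 \<notin> X" using ex_new_if_finite[OF infinite_UNIV_nat fin] by blast
  have "mle (path_fun E1 p m) (\<Sum>q\<in>SPaths X x y z. path_fun E2 q m)" for m
  proof -
    define ifl :: "'m inflow" where "ifl = (\<lambda>a b. if a = n0 \<and> b = x then m else 0)"
    have inn: "inflow_at X ifl b = (if b = x then m else 0)" for b
    proof -
      have "inflow_at X ifl b = (\<lambda>a. ifl a b) n0"
        unfolding inflow_at_def
      proof (rule infsum_single)
        show "n0 \<in> - X" using n0 by simp
        show "ifl a b = 0" if "a \<in> - X" "a \<noteq> n0" for a using that by (simp add: ifl_def)
      qed
      then show ?thesis by (simp add: ifl_def)
    qed
    have "path_fun E1 p m = path_fun E1 p (inflow_at X ifl x)" using inn by simp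
    also have "mle \<dots> (\<Sum>p\<in>SPaths X x y z. path_fun E1 p (inflow_at X ifl x))"
      by (rule sum_upper[OF finite_SPaths[OF fin] p])
    also have "mle \<dots> (tf X E1 ifl y z)" unfolding part_a[OF fin g1 y z]
      by (rule sum_upper[OF fin xX])
    also have "\<dots> = tf X E2 ifl y z" using eq by simp
    also have "\<dots> = (\<Sum>x'\<in>X. \<Sum>q\<in>SPaths X x' y z. path_fun E2 q (inflow_at X ifl x'))"
      by (rule part_a[OF fin g2 y z])
    also have "mle \<dots> (\<Sum>q\<in>SPaths X x y z. path_fun E2 q m)"
    proof (rule sum_least)
      fix x' assume x': "x' \<in> X"
      show "mle (\<Sum>q\<in>SPaths X x' y z. path_fun E2 q (inflow_at X ifl x')) (\<Sum>q\<in>SPaths X x y z. path_fun E2 q m)"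
      proof (cases "x' = x")
        case True then show ?thesis using inn by (simp add: mle_refl)
      next
        case False
        have i0: "inflow_at X ifl x' = 0" using inn[of x'] False by simp
        have z0: "path_fun E2 q (inflow_at X ifl x') = 0" if qS: "q \<in> SPaths X x' y z" for q
        proof -
          obtain ws where ws: "q = ws @ [z]" "set ws \<subseteq> X" using qS unfolding SPaths_def by blast
          have "set (butlast q) \<subseteq> X" using ws by simp
          then show ?thesis using path_zero[OF g2] i0 by simp
        qed
        have "(\<Sum>q\<in>SPaths X x' y z. path_fun E2 q (inflow_at X ifl x')) = 0"
          by (rule sum.neutral) (use z0 in blast)
        then show ?thesis by (simp add: mle_zero)
      qed
    qed
    finally show ?thesis .
  qed
  then show "\<exists>P. P \<subseteq> SPaths X x y z \<and> (\<forall>m. mle (path_fun E1 p m) (\<Sum>q\<in>P. path_fun E2 q m))"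
    by (intro exI[of _ "SPaths X x y z"]) simp
qed

end

theorem theorem5:
  assumes "flow_monoid TYPE('m::comm_monoid_add)"
      and "idempotent_add TYPE('m)"
  shows "(\<forall>(X::nat set) (E::'m edges) (ifl::'m inflow) y z.
            finite X \<and> good_edges X E \<and> y \<in> X \<and> z \<notin> X \<longrightarrow>
            tf X E ifl y z =
              (\<Sum>x\<in>X. \<Sum>p\<in>SPaths X x y z. path_fun E p (inflow_at X ifl x)))
       \<and> (\<forall>(X::nat set) (E1::'m edges) (E2::'m edges).
            finite X \<and> good_edges X E1 \<and> good_edges X E2 \<longrightarrow>
            (tf X E1 = tf X E2 \<longleftrightarrow> spath_repl X E1 E2 \<and> spath_repl X E2 E1))"
proof -
  interpret idm "TYPE('m)" using assms(2) by unfold_locales (simp add: idempotent_add_def)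
  show ?thesis
  proof (intro conjI allI impI)
    fix X :: "nat set" and E :: "'m edges" and ifl :: "'m inflow" and y z
    assume "finite X \<and> good_edges X E \<and> y \<in> X \<and> z \<notin> X"
    then show "tf X E ifl y z = (\<Sum>x\<in>X. \<Sum>p\<in>SPaths X x y z. path_fun E p (inflow_at X ifl x))"
      using part_a by blast
  next
    fix X :: "nat set" and E1 E2 :: "'m edges"
    assume a: "finite X \<and> good_edges X E1 \<and> good_edges X E2"
    show "tf X E1 = tf X E2 \<longleftrightarrow> spath_repl X E1 E2 \<and> spath_repl X E2 E1"
    proof
      assume "tf X E1 = tf X E2"
      then show "spath_repl X E1 E2 \<and> spath_repl X E2 E1"
        using a repl_of_tf[of X E1 E2] repl_of_tf[of X E2 E1] by simp
    next
      assume "spath_repl X E1 E2 \<and> spath_repl X E2 E1"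
      then show "tf X E1 = tf X E2" using a tf_eq[of X E1 E2] by simp
    qed
  qed
qed

end
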